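(* Let $S$ be a semigroup with a subsemigroup $T$ such that $S\setminus T$ is an ideal of $S$. If $S$ is finitely right equated then so is $T$.
   Context: For a semigroup $S$ and $a\in S$, $\mathbf{r}_S(a)=\{(s,t)\in S\times S\mid as=at\}$; $S$ is finitely right equated if each $\mathbf{r}_S(a)$ is finitely generated as a right congruence (the smallest right congruence containing some finite set). *)

theory Defs
  imports Main
begin

text \<open>Semigroups are subsets of an ambient type with an associative multiplication
(class semigroup_mult) that are closed under multiplication.\<close>

definition subsemigroup :: "'a::semigroup_mult set \<Rightarrow> bool" where
  "subsemigroup A \<longleftrightarrow> (\<forall>x\<in>A. \<forall>y\<in>A. x * y \<in> A)"

definition semigroup_ideal :: "'a::semigroup_mult set \<Rightarrow> 'a set \<Rightarrow> bool" where
  "semigroup_ideal S I \<longleftrightarrow> I \<subseteq> S \<and> (\<forall>x\<in>I. \<forall>s\<in>S. s * x \<in> I \<and> x * s \<in> I)"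

definition right_congruence :: "'a::semigroup_mult set \<Rightarrow> ('a \<times> 'a) set \<Rightarrow> bool" where
  "right_congruence S \<rho> \<longleftrightarrow> equiv S \<rho> \<and>
     (\<forall>s t u. (s, t) \<in> \<rho> \<longrightarrow> u \<in> S \<longrightarrow> (s * u, t * u) \<in> \<rho>)"

definition right_congruence_gen :: "'a::semigroup_mult set \<Rightarrow> ('a \<times> 'a) set \<Rightarrow> ('a \<times> 'a) set" where
  "right_congruence_gen S X = \<Inter>{\<rho>. right_congruence S \<rho> \<and> X \<subseteq> \<rho>}"

definition fg_right_congruence :: "'a::semigroup_mult set \<Rightarrow> ('a \<times> 'a) set \<Rightarrow> bool" where
  "fg_right_congruence S \<rho> \<longleftrightarrow>
     (\<exists>X. finite X \<and> X \<subseteq> S \<times> S \<and> \<rho> = right_congruence_gen S X)"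

definition r_ann :: "'a::semigroup_mult set \<Rightarrow> 'a \<Rightarrow> ('a \<times> 'a) set" where
  "r_ann S a = {(s, t). s \<in> S \<and> t \<in> S \<and> a * s = a * t}"

definition finitely_right_equated :: "'a::semigroup_mult set \<Rightarrow> bool" where
  "finitely_right_equated S \<longleftrightarrow> (\<forall>a\<in>S. fg_right_congruence S (r_ann S a))"

end

theory Submission
  imports Defs
begin

lemma rc_gen_rc:
  assumes "subsemigroup S" "X \<subseteq> S \<times> S"
  shows "right_congruence S (right_congruence_gen S X)"
proof -
  let ?F = "{\<rho>. right_congruence S \<rho> \<and> X \<subseteq> \<rho>}"
  have full: "S \<times> S \<in> ?F" using assms
    by (auto simp: right_congruence_def subsemigroup_def equiv_def refl_on_def sym_def trans_def)
  have eq: "\<And>\<rho>. \<rho> \<in> ?F \<Longrightarrow> equiv S \<rho>" by (auto simp: right_congruence_def)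
  have cp: "\<And>\<rho> s t u. \<rho> \<in> ?F \<Longrightarrow> (s,t) \<in> \<rho> \<Longrightarrow> u \<in> S \<Longrightarrow> (s*u,t*u) \<in> \<rho>"
    by (auto simp: right_congruence_def)
  have "equiv S (\<Inter>?F)"
    unfolding equiv_def refl_on_def sym_def trans_def
  proof (intro conjI allI impI ballI)
    show "\<Inter>?F \<subseteq> S \<times> S" using full by blast
  next
    fix x assume "x \<in> S" thus "(x,x) \<in> \<Inter>?F" using eq
      by (auto simp: equiv_def refl_on_def)
  next
    fix x y assume "(x,y) \<in> \<Inter>?F" thus "(y,x) \<in> \<Inter>?F" using eq
      by (auto simp: equiv_def sym_def)
  next
    fix x y z assume "(x,y) \<in> \<Inter>?F" "(y,z) \<in> \<Inter>?F" thus "(x,z) \<in> \<Inter>?F" using eq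
      by (auto simp: equiv_def) (meson transD)
  qed
  moreover have "\<forall>s t u. (s, t) \<in> \<Inter>?F \<longrightarrow> u \<in> S \<longrightarrow> (s * u, t * u) \<in> \<Inter>?F"
    using cp by blast
  ultimately show ?thesis unfolding right_congruence_def right_congruence_gen_def by blast
qed

lemma rc_gen_sub: "X \<subseteq> right_congruence_gen S X"
  unfolding right_congruence_gen_def by blast

lemma rc_gen_least: "right_congruence S \<rho> \<Longrightarrow> X \<subseteq> \<rho> \<Longrightarrow> right_congruence_gen S X \<subseteq> \<rho>"
  unfolding right_congruence_gen_def by blast

theorem mainTheorem16:
  fixes S T :: "'a::semigroup_mult set"
  assumes "subsemigroup S"
    and "T \<subseteq> S"
    and "subsemigroup T"
    and "semigroup_ideal S (S - T)"
    and "finitely_right_equated S"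
  shows "finitely_right_equated T"
  unfolding finitely_right_equated_def
proof
  fix a assume aT: "a \<in> T"
  have idl: "\<And>x s. x \<in> S \<Longrightarrow> x \<notin> T \<Longrightarrow> s \<in> S \<Longrightarrow> s * x \<in> S \<and> s * x \<notin> T \<and> x * s \<in> S \<and> x * s \<notin> T"
    using assms(4) unfolding semigroup_ideal_def by blast
  have left: "\<And>p u. p \<in> S \<Longrightarrow> u \<in> S \<Longrightarrow> p * u \<in> T \<Longrightarrow> p \<in> T \<and> u \<in> T"
    using idl by blast
  have aS: "a \<in> S" using aT assms(2) by blast
  obtain X where X: "finite X" "X \<subseteq> S \<times> S" "r_ann S a = right_congruence_gen S X"
    using assms(5) aS unfolding finitely_right_equated_def fg_right_congruence_def by blast
  define Y where "Y = X \<inter> (T \<times> T)"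
  define \<rho> where "\<rho> = right_congruence_gen T Y"
  have Ysub: "Y \<subseteq> T \<times> T" unfolding Y_def by blast
  have rho: "right_congruence T \<rho>" unfolding \<rho>_def by (rule rc_gen_rc[OF assms(3) Ysub])
  have XS: "X \<subseteq> r_ann S a" using X(3) rc_gen_sub by metis
  have rT: "right_congruence T (r_ann T a)"
    using assms(3) unfolding right_congruence_def r_ann_def subsemigroup_def equiv_def refl_on_def sym_def trans_def
    by (auto simp: mult.assoc[symmetric])
  have "Y \<subseteq> r_ann T a" using XS unfolding Y_def r_ann_def by auto
  hence sub1: "\<rho> \<subseteq> r_ann T a" unfolding \<rho>_def using rc_gen_least[OF rT] by blast
  define \<sigma> where "\<sigma> = {(s,t). s \<in> S \<and> t \<in> S \<and> a * s = a * t \<and> (a * s \<in> T \<longrightarrow> (s,t) \<in> \<rho>)}"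
  have req: "equiv T \<rho>" using rho unfolding right_congruence_def by blast
  have rcp: "\<And>s t u. (s,t) \<in> \<rho> \<Longrightarrow> u \<in> T \<Longrightarrow> (s*u,t*u) \<in> \<rho>"
    using rho unfolding right_congruence_def by blast
  have "equiv S \<sigma>"
    unfolding equiv_def refl_on_def sym_def trans_def
  proof (intro conjI allI impI ballI)
    show "\<sigma> \<subseteq> S \<times> S" unfolding \<sigma>_def by blast
  next
    fix x assume "x \<in> S" thus "(x,x) \<in> \<sigma>" using req left aS unfolding \<sigma>_def
      by (auto simp: equiv_def refl_on_def)
  next
    fix x y assume "(x,y) \<in> \<sigma>" thus "(y,x) \<in> \<sigma>" using req unfolding \<sigma>_def
      by (auto simp: equiv_def sym_def)
  next
    fix x y z assume "(x,y) \<in> \<sigma>" "(y,z) \<in> \<sigma>" thus "(x,z) \<in> \<sigma>" using req unfolding \<sigma>_def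
      by (auto simp: equiv_def) (meson transD)
  qed
  moreover have "\<forall>s t u. (s, t) \<in> \<sigma> \<longrightarrow> u \<in> S \<longrightarrow> (s * u, t * u) \<in> \<sigma>"
  proof (intro allI impI)
    fix s t u assume st: "(s,t) \<in> \<sigma>" and u: "u \<in> S"
    hence sS: "s \<in> S" and tS: "t \<in> S" and e: "a * s = a * t" and i: "a * s \<in> T \<longrightarrow> (s,t) \<in> \<rho>"
      unfolding \<sigma>_def by auto
    have suS: "s*u \<in> S" "t*u \<in> S" using assms(1) sS tS u unfolding subsemigroup_def by auto
    have asS: "a * s \<in> S" using assms(1) sS aS unfolding subsemigroup_def by auto
    have e2: "a * (s*u) = a * (t*u)" using e by (metis mult.assoc)
    have "a * (s*u) \<in> T \<longrightarrow> (s*u,t*u) \<in> \<rho>"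
    proof
      assume "a * (s*u) \<in> T"
      hence "(a*s)*u \<in> T" by (simp add: mult.assoc)
      hence "a*s \<in> T" "u \<in> T" using left asS u by blast+
      thus "(s*u,t*u) \<in> \<rho>" using i rcp by blast
    qed
    thus "(s * u, t * u) \<in> \<sigma>" using suS e2 unfolding \<sigma>_def by auto
  qed
  ultimately have rs: "right_congruence S \<sigma>" unfolding right_congruence_def by blast
  have "X \<subseteq> \<sigma>"
  proof
    fix p assume pX: "p \<in> X"
    obtain c d where p: "p = (c,d)" by fastforce
    have cd: "c \<in> S" "d \<in> S" "a * c = a * d" using XS pX p unfolding r_ann_def by auto
    have "a * c \<in> T \<longrightarrow> (c,d) \<in> \<rho>"
    proof
      assume "a * c \<in> T"
      hence "c \<in> T" "d \<in> T" using left aS cd by (metis)+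
      hence "(c,d) \<in> Y" using pX p unfolding Y_def by auto
      thus "(c,d) \<in> \<rho>" unfolding \<rho>_def using rc_gen_sub by blast
    qed
    thus "p \<in> \<sigma>" using cd p unfolding \<sigma>_def by auto
  qed
  hence "r_ann S a \<subseteq> \<sigma>" using X(3) rc_gen_least[OF rs] by metis
  hence sub2: "r_ann T a \<subseteq> \<rho>"
  proof -
    assume h: "r_ann S a \<subseteq> \<sigma>"
    show ?thesis
    proof
      fix p assume "p \<in> r_ann T a"
      then obtain s t where p: "p = (s,t)" "s \<in> T" "t \<in> T" "a*s = a*t" unfolding r_ann_def by auto
      hence "p \<in> r_ann S a" using assms(2) unfolding r_ann_def by auto
      hence "p \<in> \<sigma>" using h by blast
      moreover have "a*s \<in> T" using assms(3) aT p unfolding subsemigroup_def by auto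
      ultimately show "p \<in> \<rho>" using p unfolding \<sigma>_def by auto
    qed
  qed
  have "finite Y" unfolding Y_def using X(1) by blast
  thus "fg_right_congruence T (r_ann T a)" unfolding fg_right_congruence_def
    using Ysub sub1 sub2 \<rho>_def by blast
qed

end
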